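(* Let $p$ be an odd prime and $b,c\in\mathbb Z$. Then $$\binom{p-1}{p-k}_{b,c}\equiv u_k(-b,c)\pmod p\qquad\text{for all } k=0,1,\ldots,p-1.$$
   Context: For $n\in\mathbb N$ and $b,c\in\mathbb Z$, the generalized trinomial coefficients $\binom{n}{k}_{b,c}$ ($k\in\mathbb Z$) are the integers defined by $\left(x+b+\frac{c}{x}\right)^n=\sum_{k\in\mathbb Z}\binom{n}{k}_{b,c}x^k$. For $A,B\in\mathbb Z$, the Lucas sequence $u_n=u_n(A,B)$ ($n\in\mathbb N$) is defined by $u_0=0$, $u_1=1$, and $u_{n+1}=Au_n-Bu_{n-1}$ for $n\ge1$. *)

theory Defs
  imports "HOL-Computational_Algebra.Formal_Laurent_Series" "HOL-Number_Theory.Cong"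
begin

definition gtrinom :: "nat \<Rightarrow> int \<Rightarrow> int \<Rightarrow> int \<Rightarrow> int" where
  "gtrinom n k b c =
     fls_nth ((fls_X + fls_const b + fls_const c * fls_X_inv) ^ n :: int fls) k"

fun lucas_u :: "int \<Rightarrow> int \<Rightarrow> nat \<Rightarrow> int" where
  "lucas_u A B 0 = 0"
| "lucas_u A B (Suc 0) = 1"
| "lucas_u A B (Suc (Suc n)) = A * lucas_u A B (Suc n) - B * lucas_u A B n"

end

theory Submission
  imports Defs "HOL-Computational_Algebra.Primes"
begin

unbundle fps_syntax

lemma mulL:
  fixes M :: "int fls"
  shows "((fls_X + fls_const b + fls_const c * fls_X_inv) * M) $$ j
     = M $$ (j-1) + b * M $$ j + c * M $$ (j+1)"
proof -
  have "(fls_X + fls_const b + fls_const c * fls_X_inv) * M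
     = fls_X * M + fls_const b * M + fls_const c * (fls_X_inv * M)"
    by (simp add: distrib_right mult.assoc)
  then show ?thesis
    by (simp add: fls_X_times_conv_shift fls_X_inv_times_conv_shift)
qed

lemma topL:
  "(\<forall>j. j > int n \<longrightarrow> ((fls_X + fls_const b + fls_const c * fls_X_inv) ^ n :: int fls) $$ j = 0)
   \<and> ((fls_X + fls_const b + fls_const c * fls_X_inv) ^ n :: int fls) $$ int n = 1"
proof (induction n)
  case 0
  then show ?case by simp
next
  case (Suc n)
  then show ?case
    by (simp only: power_Suc mulL) auto
qed

lemma Ypow:
  fixes j :: int
  assumes "j > 0"
  shows "((fls_const b + fls_const c * fls_X_inv) ^ n :: int fls) $$ j = 0"
  using assms
proof (induction n arbitrary: j)
  case 0
  then show ?case by simp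
next
  case (Suc n)
  have "(fls_const b + fls_const c * fls_X_inv) * (fls_const b + fls_const c * fls_X_inv) ^ n
     = fls_const b * (fls_const b + fls_const c * fls_X_inv) ^ n
       + fls_const c * (fls_X_inv * (fls_const b + fls_const c * fls_X_inv) ^ n)"
    by (simp add: distrib_right mult.assoc)
  then show ?case using Suc
    by (simp only: power_Suc) (simp add: fls_X_inv_times_conv_shift)
qed

lemma frob:
  fixes p :: nat and j :: int
  assumes p: "prime p" and j: "1 \<le> j" "j \<le> int p - 1"
  shows "int p dvd ((fls_X + fls_const b + fls_const c * fls_X_inv) ^ p :: int fls) $$ j"
proof -
  define Y :: "int fls" where "Y = fls_const b + fls_const c * fls_X_inv"
  have L: "fls_X + fls_const b + fls_const c * fls_X_inv = fls_X + Y"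
    by (simp add: Y_def add.assoc)
  have "(fls_X + Y) ^ p = (\<Sum>k\<le>p. of_nat (p choose k) * fls_X ^ k * Y ^ (p - k))"
    by (rule binomial_ring)
  hence "((fls_X + Y) ^ p) $$ j = (\<Sum>k\<le>p. of_nat (p choose k) * (fls_X ^ k * Y ^ (p - k)) $$ j)"
    by (simp add: fls_nth_sum mult.assoc)
  also have "int p dvd \<dots>"
  proof (rule dvd_sum)
    fix k assume k: "k \<in> {..p}"
    show "int p dvd of_nat (p choose k) * (fls_X ^ k * Y ^ (p - k)) $$ j"
    proof (cases "k = 0")
      case True
      then show ?thesis using Ypow[of j b c p] j by (simp add: Y_def)
    next
      case False
      show ?thesis
      proof (cases "k = p")
        case True
        then show ?thesis using j by simp
      next
        case False
        with \<open>k \<noteq> 0\<close> k have "p dvd (p choose k)"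
          using p by (intro dvd_choose_prime) (auto simp: prime_gt_0_nat)
        hence "int p dvd int (p choose k)" by simp
        then show ?thesis by simp
      qed
    qed
  qed
  finally show ?thesis by (simp add: L)
qed

theorem lemma4p2:
  fixes p k :: nat and b c :: int
  assumes "prime p" and "odd p" and "k \<le> p - 1"
  shows "[gtrinom (p - 1) (int p - int k) b c = lucas_u (- b) c k] (mod int p)"
proof -
  define L :: "int fls" where "L = fls_X + fls_const b + fls_const c * fls_X_inv"
  define M where "M = L ^ (p - 1)"
  have p1: "p \<ge> 2" using assms(1) prime_ge_2_nat by blast
  have LM: "L ^ p = L * M" unfolding M_def using p1
    by (metis Suc_diff_1 le_trans one_le_numeral not_one_le_zero neq0_conv power_Suc)
  have top: "\<And>j. j > int (p - 1) \<Longrightarrow> M $$ j = 0" "M $$ int (p - 1) = 1"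
    using topL[of "p - 1" b c] unfolding M_def L_def by auto
  have rec: "\<And>j. 1 \<le> j \<Longrightarrow> j \<le> int p - 1 \<Longrightarrow>
      int p dvd M $$ (j-1) + b * M $$ j + c * M $$ (j+1)"
  proof -
    fix j :: int assume "1 \<le> j" "j \<le> int p - 1"
    hence "int p dvd (L ^ p) $$ j" using frob[OF assms(1)] unfolding L_def by blast
    also have "(L ^ p) $$ j = (L * M) $$ j" by (simp only: LM)
    also have "\<dots> = M $$ (j-1) + b * M $$ j + c * M $$ (j+1)"
      unfolding L_def by (rule mulL)
    finally show "int p dvd M $$ (j-1) + b * M $$ j + c * M $$ (j+1)" .
  qed
  have main: "\<And>k. k \<le> p - 1 \<Longrightarrow> [M $$ (int p - int k) = lucas_u (- b) c k] (mod int p)"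
  proof -
    fix k show "k \<le> p - 1 \<Longrightarrow> [M $$ (int p - int k) = lucas_u (- b) c k] (mod int p)"
    proof (induction k rule: less_induct)
      case (less k)
      show ?case
      proof (cases k)
        case 0
        then show ?thesis using top(1)[of "int p"] p1 by simp
      next
        case (Suc m)
        show ?thesis
        proof (cases m)
          case 0
          then show ?thesis using top(2) Suc p1 by (simp add: of_nat_diff)
        next
          case (Suc n)
          have IH1: "[M $$ (int p - int m) = lucas_u (- b) c m] (mod int p)"
            using less \<open>k = Suc m\<close> by simp
          have IH2: "[M $$ (int p - int n) = lucas_u (- b) c n] (mod int p)"
            using less \<open>k = Suc m\<close> Suc by simp
          have d: "int p dvd M $$ (int p - int k) + b * M $$ (int p - int m) + c * M $$ (int p - int n)"
            using rec[of "int p - int m"] less.prems \<open>k = Suc m\<close> Suc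
            by (simp add: algebra_simps)
          have "[M $$ (int p - int k) = - b * M $$ (int p - int m) - c * M $$ (int p - int n)] (mod int p)"
            using d by (simp add: cong_iff_dvd_diff algebra_simps)
          moreover have "[- b * M $$ (int p - int m) - c * M $$ (int p - int n)
               = - b * lucas_u (- b) c m - c * lucas_u (- b) c n] (mod int p)"
            by (intro cong_diff cong_mult cong_refl IH1 IH2)
          ultimately show ?thesis using \<open>k = Suc m\<close> Suc by (auto elim: cong_trans)
        qed
      qed
    qed
  qed
  show ?thesis using main[OF assms(3)] unfolding gtrinom_def M_def L_def .
qed

end
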